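(* Every almost reciprocal Puiseux monoid is atomic.
   Context: A Puiseux monoid is an additive submonoid of $(\mathbb{Q}_{\ge 0},+)$. For a positive rational $r = n/d$ in lowest terms, $\mathsf{d}(r) := d$. An almost reciprocal Puiseux monoid is a monoid of the form $\langle \frac{c_n}{d_n} \mid n \in \mathbb{N} \rangle$ (the submonoid of $\mathbb{Q}_{\ge 0}$ generated by these elements), where $(d_n)_{n\ge 1}$ is a strictly increasing sequence of positive integers whose terms are pairwise relatively prime, and $(c_n)_{n \ge 1}$ is a sequence of positive integers with $\gcd(c_n,d_n)=1$ for every $n$. An atom of $M$ is a nonzero element $a$ such that $a = x+y$ with $x,y \in M$ forces $x=0$ or $y=0$; $M$ is atomic if every element is a finite sum of atoms. *)

theory Defs
  imports Complex_Main
begin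

inductive_set gen_monoid :: "rat set \<Rightarrow> rat set" for S :: "rat set" where
  zero: "0 \<in> gen_monoid S"
| add_gen: "x \<in> gen_monoid S \<Longrightarrow> s \<in> S \<Longrightarrow> x + s \<in> gen_monoid S"

definition is_atom :: "rat set \<Rightarrow> rat \<Rightarrow> bool" where
  "is_atom M a \<longleftrightarrow> a \<in> M \<and> a \<noteq> 0 \<and>
     (\<forall>x\<in>M. \<forall>y\<in>M. a = x + y \<longrightarrow> x = 0 \<or> y = 0)"

definition atomic_monoid :: "rat set \<Rightarrow> bool" where
  "atomic_monoid M \<longleftrightarrow> (\<forall>x\<in>M. x \<noteq> 0 \<longrightarrow>
     (\<exists>as. as \<noteq> [] \<and> (\<forall>a\<in>set as. is_atom M a) \<and> sum_list as = x))"

text \<open>Almost reciprocal Puiseux monoid data (sequences indexed from 0 instead of 1).\<close>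
definition almost_reciprocal_data :: "(nat \<Rightarrow> nat) \<Rightarrow> (nat \<Rightarrow> nat) \<Rightarrow> bool" where
  "almost_reciprocal_data c d \<longleftrightarrow>
     strict_mono d \<and> (\<forall>n. 0 < d n) \<and> (\<forall>m n. m \<noteq> n \<longrightarrow> coprime (d m) (d n)) \<and>
     (\<forall>n. 0 < c n \<and> coprime (c n) (d n))"

end

theory Submission
  imports Defs
begin

lemma gen_monoid_list:
  assumes "x \<in> gen_monoid (range g)"
  shows "\<exists>ns. x = sum_list (map g ns)"
  using assms
proof (induction rule: gen_monoid.induct)
  case zero
  then show ?case by (rule exI[of _ "[]"]) simp
next
  case (add_gen x s)
  then obtain ns m where "x = sum_list (map g ns)" "s = g m" by auto
  then show ?case by (intro exI[of _ "ns @ [m]"]) simp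
qed

lemma list_gen_monoid:
  "sum_list (map g ns) \<in> gen_monoid (range g)"
proof (induction ns)
  case Nil
  then show ?case by (simp add: gen_monoid.zero)
next
  case (Cons a ns)
  have "sum_list (map g ns) + g a \<in> gen_monoid (range g)"
    using Cons by (intro gen_monoid.add_gen) auto
  then show ?case by (simp add: add.commute)
qed

lemma nonneg_member_le:
  fixes L :: "rat list"
  assumes "\<forall>b\<in>set L. 0 \<le> b" "a \<in> set L"
  shows "a \<le> sum_list L"
  using assms
proof (induction L)
  case Nil
  then show ?case by simp
next
  case (Cons b L)
  have "0 \<le> sum_list L" using Cons.prems(1) by (intro sum_list_nonneg) auto
  then show ?case using Cons by (cases "a = b") auto
qed

lemma nonneg_sum:
  fixes L :: "rat list"
  assumes "\<forall>b\<in>set L. 0 \<le> b"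
  shows "0 \<le> sum_list L"
  using assms by (intro sum_list_nonneg) auto

lemma integral_sum:
  fixes c d :: "nat \<Rightarrow> nat"
  assumes "\<forall>n. 0 < d n"
  shows "\<forall>m\<in>set ns. d m dvd P \<Longrightarrow>
     of_nat P * sum_list (map (\<lambda>n. of_nat (c n) / of_nat (d n) :: rat) ns) \<in> \<int>"
proof (induction ns)
  case Nil
  then show ?case by simp
next
  case (Cons m ns)
  then obtain k where k: "P = d m * k" by auto
  have "of_nat P * (of_nat (c m) / of_nat (d m) :: rat) = of_nat (c m * k)"
    proof -
    have "d m \<noteq> 0" using assms by (metis less_irrefl)
    then show ?thesis by (simp add: k)
  qed
  then have "of_nat P * (of_nat (c m) / of_nat (d m) :: rat) \<in> \<int>" by simp
  moreover have "of_nat P * sum_list (map (\<lambda>n. of_nat (c n) / of_nat (d n) :: rat) ns) \<in> \<int>"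
    using Cons by auto
  ultimately show ?case by (simp add: distrib_left)
qed

lemma key:
  fixes c d :: "nat \<Rightarrow> nat"
  assumes A: "almost_reciprocal_data c d"
  and nn: "n \<notin> set ns"
  and eq: "(of_nat (c n) / of_nat (d n) :: rat) =
            sum_list (map (\<lambda>n. of_nat (c n) / of_nat (d n) :: rat) ns)"
  shows "d n = 1"
proof -
  define P where "P = (\<Prod>m\<in>set ns. d m)"
  have dpos: "\<forall>n. 0 < d n" using A unfolding almost_reciprocal_data_def by auto
  have cop: "coprime P (d n)" unfolding P_def
  proof (rule prod_coprime_left)
    fix i assume "i \<in> set ns"
    then have "i \<noteq> n" using nn by auto
    then show "coprime (d i) (d n)" using A unfolding almost_reciprocal_data_def by blast
  qed
  have "\<forall>m\<in>set ns. d m dvd P" unfolding P_def by (auto intro: dvd_prodI)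
  then have "of_nat P * sum_list (map (\<lambda>n. of_nat (c n) / of_nat (d n) :: rat) ns) \<in> \<int>"
    by (rule integral_sum[OF dpos])
  then have "of_nat P * (of_nat (c n) / of_nat (d n) :: rat) \<in> \<int>"
    by (simp only: eq)
  then obtain k where k: "of_nat P * (of_nat (c n) / of_nat (d n) :: rat) = of_int k"
    by (auto elim: Ints_cases)
  have dn0: "d n \<noteq> 0" using dpos by (metis less_irrefl)
  from k have "(of_int (int P * int (c n)) :: rat) = of_int (int (d n) * k)"
    using dn0 by (simp add: field_simps)
  then have "int P * int (c n) = int (d n) * k" by (simp only: of_int_eq_iff)
  then have "int (d n) dvd int P * int (c n)" by (metis dvd_triv_left)
  then have "d n dvd P * c n" by (metis of_nat_dvd_iff of_nat_mult)
  moreover have "coprime (d n) (c n)" using A unfolding almost_reciprocal_data_def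
    by (simp add: coprime_commute)
  ultimately have "d n dvd P" using coprime_dvd_mult_left_iff by blast
  moreover have "coprime (d n) P" using cop by (simp add: coprime_commute)
  ultimately show ?thesis using coprime_common_divisor_nat[of "d n" P "d n"] by simp
qed

lemma gen_pos:
  fixes c d :: "nat \<Rightarrow> nat"
  assumes A: "almost_reciprocal_data c d"
  shows "0 < (of_nat (c n) / of_nat (d n) :: rat)"
  using A unfolding almost_reciprocal_data_def by auto

lemma no_self:
  fixes c d :: "nat \<Rightarrow> nat"
  assumes A: "almost_reciprocal_data c d"
  and eq: "(of_nat (c n) / of_nat (d n) :: rat) =
     sum_list (map (\<lambda>n. of_nat (c n) / of_nat (d n) :: rat) xs) +
     sum_list (map (\<lambda>n. of_nat (c n) / of_nat (d n) :: rat) ys)"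
  and x0: "sum_list (map (\<lambda>n. of_nat (c n) / of_nat (d n) :: rat) xs) \<noteq> 0"
  and y0: "sum_list (map (\<lambda>n. of_nat (c n) / of_nat (d n) :: rat) ys) \<noteq> 0"
  shows "n \<notin> set xs \<and> n \<notin> set ys"
proof -
  let ?g = "\<lambda>n. of_nat (c n) / of_nat (d n) :: rat"
  have nn: "\<forall>b\<in>set (map ?g zs). 0 \<le> b" for zs using gen_pos[OF A] by (auto intro: less_imp_le)
  have "n \<notin> set xs"
  proof
    assume "n \<in> set xs"
    then have "?g n \<le> sum_list (map ?g xs)" using nonneg_member_le[OF nn] by auto
    moreover have "0 \<le> sum_list (map ?g ys)" using nonneg_sum[OF nn] by auto
    ultimately show False using eq y0 by linarith
  qed
  moreover have "n \<notin> set ys"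
  proof
    assume "n \<in> set ys"
    then have "?g n \<le> sum_list (map ?g ys)" using nonneg_member_le[OF nn] by auto
    moreover have "0 \<le> sum_list (map ?g xs)" using nonneg_sum[OF nn] by auto
    ultimately show False using eq x0 by linarith
  qed
  ultimately show ?thesis by simp
qed

lemma atom_gen:
  fixes c d :: "nat \<Rightarrow> nat"
  assumes A: "almost_reciprocal_data c d" and d1: "d n \<noteq> 1"
  shows "is_atom (gen_monoid (range (\<lambda>n. of_nat (c n) / of_nat (d n) :: rat)))
           (of_nat (c n) / of_nat (d n))"
proof -
  let ?g = "\<lambda>n. of_nat (c n) / of_nat (d n) :: rat"
  have "?g n \<in> gen_monoid (range ?g)" using list_gen_monoid[of ?g "[n]"] by simp
  moreover have "?g n \<noteq> 0" by (rule dual_order.strict_implies_not_eq[OF gen_pos[OF A]])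
  moreover have "x = 0 \<or> y = 0" if hx: "x \<in> gen_monoid (range ?g)" and hy: "y \<in> gen_monoid (range ?g)"
     and hs: "?g n = x + y" for x y
  proof (rule ccontr)
    assume "\<not> (x = 0 \<or> y = 0)"
    then have x0: "x \<noteq> 0" and y0: "y \<noteq> 0" by auto
    obtain xs where xs: "x = sum_list (map ?g xs)" using gen_monoid_list[OF hx] by blast
    obtain ys where ys: "y = sum_list (map ?g ys)" using gen_monoid_list[OF hy] by blast
    have "n \<notin> set xs \<and> n \<notin> set ys" using no_self[OF A, of n xs ys] hs x0 y0 xs ys by blast
    then have "n \<notin> set (xs @ ys)" by simp
    moreover have "?g n = sum_list (map ?g (xs @ ys))" using hs xs ys by simp
    ultimately show False using key[OF A] d1 by blast
  qed
  ultimately show ?thesis unfolding is_atom_def by blast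
qed

lemma gen_atoms:
  fixes c d :: "nat \<Rightarrow> nat"
  assumes A: "almost_reciprocal_data c d"
  shows "\<exists>as. as \<noteq> [] \<and> (\<forall>a\<in>set as. is_atom (gen_monoid (range (\<lambda>n. of_nat (c n) / of_nat (d n) :: rat))) a)
     \<and> sum_list as = (of_nat (c n) / of_nat (d n) :: rat)"
proof -
  let ?g = "\<lambda>n. of_nat (c n) / of_nat (d n) :: rat"
  let ?M = "gen_monoid (range ?g)"
  show ?thesis
  proof (cases "is_atom ?M (?g n)")
    case True
    then show ?thesis by (intro exI[of _ "[?g n]"]) simp
  next
    case False
    then have d1: "d n = 1" using atom_gen[OF A] by blast
    have inj: "inj d" using A unfolding almost_reciprocal_data_def using strict_mono_imp_inj_on by blast
    have "?g n \<in> ?M" using list_gen_monoid[of ?g "[n]"] by simp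
    moreover have "?g n \<noteq> 0" by (rule dual_order.strict_implies_not_eq[OF gen_pos[OF A]])
    ultimately obtain x y where xy: "x \<in> ?M" "y \<in> ?M" "?g n = x + y" "x \<noteq> 0" "y \<noteq> 0"
      using False unfolding is_atom_def by blast
    obtain xs where xs: "x = sum_list (map ?g xs)" using gen_monoid_list[OF xy(1)] by blast
    obtain ys where ys: "y = sum_list (map ?g ys)" using gen_monoid_list[OF xy(2)] by blast
    have "n \<notin> set xs \<and> n \<notin> set ys" using no_self[OF A, of n xs ys] xy(3-5) xs ys by blast
    then have nin: "n \<notin> set (xs @ ys)" by simp
    have "\<forall>m\<in>set (xs @ ys). is_atom ?M (?g m)"
    proof
      fix m assume "m \<in> set (xs @ ys)"
      then have "m \<noteq> n" using nin by auto
      then have "d m \<noteq> 1" using inj d1 by (metis injD)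
      then show "is_atom ?M (?g m)" using atom_gen[OF A] by blast
    qed
    moreover have "sum_list (map ?g (xs @ ys)) = ?g n" using xy xs ys by simp
    moreover have "map ?g (xs @ ys) \<noteq> []" using xy xs by auto
    ultimately show ?thesis by (intro exI[of _ "map ?g (xs @ ys)"] conjI) auto
  qed
qed

theorem corollary3p6:
  fixes c d :: "nat \<Rightarrow> nat"
  assumes "almost_reciprocal_data c d"
  shows "atomic_monoid (gen_monoid (range (\<lambda>n. of_nat (c n) / of_nat (d n) :: rat)))"
proof -
  let ?g = "\<lambda>n. of_nat (c n) / of_nat (d n) :: rat"
  let ?M = "gen_monoid (range ?g)"
  have L: "\<exists>as. (\<forall>a\<in>set as. is_atom ?M a) \<and> sum_list as = sum_list (map ?g ns)
            \<and> (ns \<noteq> [] \<longrightarrow> as \<noteq> [])" for ns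
  proof (induction ns)
    case Nil
    then show ?case by (intro exI[of _ "[]"]) simp
  next
    case (Cons m ns)
    then obtain as where as: "\<forall>a\<in>set as. is_atom ?M a" "sum_list as = sum_list (map ?g ns)"
      by blast
    obtain bs where bs: "bs \<noteq> []" "\<forall>a\<in>set bs. is_atom ?M a" "sum_list bs = ?g m"
      using gen_atoms[OF assms, of m] by blast
    show ?case using as bs by (intro exI[of _ "bs @ as"]) auto
  qed
  show ?thesis unfolding atomic_monoid_def
  proof (intro ballI impI)
    fix x assume "x \<in> ?M" "x \<noteq> 0"
    then obtain ns where ns: "x = sum_list (map ?g ns)" using gen_monoid_list[OF \<open>x \<in> ?M\<close>] by blast
    then have "ns \<noteq> []" using \<open>x \<noteq> 0\<close> by auto
    then show "\<exists>as. as \<noteq> [] \<and> (\<forall>a\<in>set as. is_atom ?M a) \<and> sum_list as = x"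
      using L[of ns] ns by blast
  qed
qed

end
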